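(* Fix an association $\kappa$ in which every cell serves at least one UE and every UE is served by at least one cell, a power vector $\bm{p}\in\mathbb{R}^n_{>0}$ and a demand vector $\bm{d}\in\mathbb{R}^m_{>0}$. For a noise power $\sigma^2>0$ and a load vector $\bm{x}\in\mathbb{R}^n_{\ge 0}$, define $\bm{F}(\sigma^2,\bm{x})\in\mathbb{R}^n$ by $$F_i(\sigma^2,\bm{x})=\sum_{j\in\mathcal{J}_i}\frac{d_j}{MB\log_2\!\big(1+\gamma_j(\sigma^2,\bm{x})\big)},\qquad \gamma_j(\sigma^2,\bm{x})=\frac{\sum_{i'\in\mathcal{I}_j}p_{i'}g_{i'j}}{\sum_{k\in\mathcal{I}\setminus\mathcal{I}_j}p_kg_{kj}x_k+\sigma^2}.$$ Then $\bm{F}$ is scalable jointly in $(\sigma^2,\bm{x})$: for every $\sigma^2>0$, every $\bm{x}\in\mathbb{R}^n_{\ge0}$ and every $\alpha>1$, $$\alpha\,F_i(\sigma^2,\bm{x})>F_i(\alpha\sigma^2,\alpha\bm{x})\quad\text{for all } i\in\mathcal{I}.$$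
   Context: Cellular network model. $\mathcal{I}$ is a finite set of $n$ cells and $\mathcal{J}$ a finite set of $m$ user equipments (UEs). An association is a matrix $\kappa\in\{0,1\}^{n\times m}$. It determines $\mathcal{I}_j=\{i:\kappa_{ij}=1\}$, the set of cells serving UE $j$, and $\mathcal{J}_i=\{j:\kappa_{ij}=1\}$, the set of UEs served by cell $i$. $M>0$ is the number of resource units and $B>0$ the bandwidth per resource unit. The channel gains satisfy $g_{ij}>0$. The standing assumption that every cell serves at least one UE makes the load function positive, as the paper requires. *)

theory Defs
  imports "HOL-Analysis.Analysis"
begin

text \<open>Cells form a finite set I, UEs a finite set J; the association is kappa i j
  (kappa i j = True iff kappa_ij = 1). Vectors are functions on the index sets.\<close>

definition serving_cells :: "'c set \<Rightarrow> ('c \<Rightarrow> 'u \<Rightarrow> bool) \<Rightarrow> 'u \<Rightarrow> 'c set" where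
  "serving_cells I kappa j = {i \<in> I. kappa i j}"

definition served_ues :: "'u set \<Rightarrow> ('c \<Rightarrow> 'u \<Rightarrow> bool) \<Rightarrow> 'c \<Rightarrow> 'u set" where
  "served_ues J kappa i = {j \<in> J. kappa i j}"

definition sinr :: "'c set \<Rightarrow> ('c \<Rightarrow> 'u \<Rightarrow> bool) \<Rightarrow> ('c \<Rightarrow> real) \<Rightarrow> ('c \<Rightarrow> 'u \<Rightarrow> real)
    \<Rightarrow> real \<Rightarrow> ('c \<Rightarrow> real) \<Rightarrow> 'u \<Rightarrow> real" where
  "sinr I kappa p g s2 x j =
     (\<Sum>i'\<in>serving_cells I kappa j. p i' * g i' j) /
     ((\<Sum>k\<in>I - serving_cells I kappa j. p k * g k j * x k) + s2)"

definition load_map :: "'c set \<Rightarrow> 'u set \<Rightarrow> ('c \<Rightarrow> 'u \<Rightarrow> bool) \<Rightarrow> real \<Rightarrow> real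
    \<Rightarrow> ('c \<Rightarrow> real) \<Rightarrow> ('u \<Rightarrow> real) \<Rightarrow> ('c \<Rightarrow> 'u \<Rightarrow> real)
    \<Rightarrow> real \<Rightarrow> ('c \<Rightarrow> real) \<Rightarrow> 'c \<Rightarrow> real" where
  "load_map I J kappa M B p d g s2 x i =
     (\<Sum>j\<in>served_ues J kappa i. d j / (M * B * log 2 (1 + sinr I kappa p g s2 x j)))"

end

theory Submission
  imports Defs
begin

lemma key_ln:
  fixes \<gamma> a :: real assumes "\<gamma> > 0" "a > 1"
  shows "ln (1 + \<gamma>) < a * ln (1 + \<gamma> / a)"
proof -
  define t where "t = \<gamma> / a"
  have t: "t > 0" using assms by (simp add: t_def)
  have g: "\<gamma> = a * t" using assms by (simp add: t_def)
  have "ln (1 + \<gamma>) - ln (1 + t) = ln (1 + (a - 1) * t / (1 + t))"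
  proof -
    have e: "1 + (a - 1) * t / (1 + t) = (1 + \<gamma>) / (1 + t)" using t by (simp add: g field_simps)
    have p1: "1 + \<gamma> > 0" using t assms g by (simp add: add_pos_pos)
    have p2: "1 + t > 0" using t by simp
    show ?thesis unfolding e using p1 p2 by (simp add: ln_div)
  qed
  also have "\<dots> < (a - 1) * t / (1 + t)"
    using t assms by (intro ln_add_one_self_less_self) simp
  also have "\<dots> = (a - 1) * (t / (1 + t))" by simp
  also have "\<dots> < (a - 1) * ln (t + 1)"
    using t assms ln_add1_gt[of t] by (intro mult_strict_left_mono) auto
  finally show ?thesis by (simp add: t_def[symmetric] algebra_simps)
qed

lemma key_log:
  fixes \<gamma> a :: real assumes "\<gamma> > 0" "a > 1"
  shows "log 2 (1 + \<gamma>) < a * log 2 (1 + \<gamma> / a)"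
  using key_ln[OF assms] by (simp add: log_def divide_strict_right_mono)

theorem proposition2:
  fixes I :: "'c set" and J :: "'u set" and kappa :: "'c \<Rightarrow> 'u \<Rightarrow> bool"
    and M B :: real and p :: "'c \<Rightarrow> real" and d :: "'u \<Rightarrow> real"
    and g :: "'c \<Rightarrow> 'u \<Rightarrow> real"
  assumes "finite I" and "finite J"
    and "M > 0" and "B > 0"
    and "\<And>i j. i \<in> I \<Longrightarrow> j \<in> J \<Longrightarrow> g i j > 0"
    and "\<And>i. i \<in> I \<Longrightarrow> \<exists>j\<in>J. kappa i j"
    and "\<And>j. j \<in> J \<Longrightarrow> \<exists>i\<in>I. kappa i j"
    and "\<And>i. i \<in> I \<Longrightarrow> p i > 0"
    and "\<And>j. j \<in> J \<Longrightarrow> d j > 0"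
  shows "\<forall>s2 > 0. \<forall>x. (\<forall>i\<in>I. x i \<ge> 0) \<longrightarrow> (\<forall>\<alpha> > 1. \<forall>i\<in>I.
           \<alpha> * load_map I J kappa M B p d g s2 x i
             > load_map I J kappa M B p d g (\<alpha> * s2) (\<lambda>k. \<alpha> * x k) i)"
proof (intro allI impI ballI)
  fix s2 :: real and x :: "'c \<Rightarrow> real" and \<alpha> :: real and i
  assume s2: "s2 > 0" and x: "\<forall>i\<in>I. x i \<ge> 0" and a: "\<alpha> > 1" and i: "i \<in> I"
  have trm: "d j / (M * B * log 2 (1 + sinr I kappa p g (\<alpha> * s2) (\<lambda>k. \<alpha> * x k) j))
      < \<alpha> * (d j / (M * B * log 2 (1 + sinr I kappa p g s2 x j)))" if j: "j \<in> J" for j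
  proof -
    define S where "S = (\<Sum>i'\<in>serving_cells I kappa j. p i' * g i' j)"
    define D where "D = (\<Sum>k\<in>I - serving_cells I kappa j. p k * g k j * x k) + s2"
    obtain i0 where i0: "i0 \<in> I" "kappa i0 j" using assms(7)[OF j] by blast
    have fin: "finite (serving_cells I kappa j)" using assms(1) by (simp add: serving_cells_def)
    have "S > 0" unfolding S_def
    proof (rule sum_pos2[OF fin, of i0])
      show "i0 \<in> serving_cells I kappa j" using i0 by (simp add: serving_cells_def)
      show "0 < p i0 * g i0 j" using i0 assms(5,8) j by simp
      show "\<And>i. i \<in> serving_cells I kappa j \<Longrightarrow> 0 \<le> p i * g i j"
        using assms(5,8) j by (auto simp: serving_cells_def intro!: less_imp_le)
    qed
    have "(\<Sum>k\<in>I - serving_cells I kappa j. p k * g k j * x k) \<ge> 0"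
      using assms(5,8) j x by (intro sum_nonneg) (simp add: less_imp_le)
    hence D: "D > 0" using s2 by (simp add: D_def)
    have sg: "sinr I kappa p g s2 x j = S / D" by (simp add: sinr_def S_def D_def)
    have "(\<Sum>k\<in>I - serving_cells I kappa j. p k * g k j * (\<alpha> * x k)) + \<alpha> * s2 = \<alpha> * D"
      by (simp add: D_def sum_distrib_left algebra_simps)
    hence sa: "sinr I kappa p g (\<alpha> * s2) (\<lambda>k. \<alpha> * x k) j = (S / D) / \<alpha>"
      by (simp add: sinr_def S_def[symmetric])
    define \<gamma> where "\<gamma> = S / D"
    have gp: "\<gamma> > 0" using \<open>S > 0\<close> D by (simp add: \<gamma>_def)
    have L1: "log 2 (1 + \<gamma>) > 0" using gp by simp
    have L2: "log 2 (1 + \<gamma> / \<alpha>) > 0" proof -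
      have "\<gamma> / \<alpha> > 0" using gp a by simp
      thus ?thesis by simp
    qed
    have k: "log 2 (1 + \<gamma>) < \<alpha> * log 2 (1 + \<gamma> / \<alpha>)" by (rule key_log[OF gp a])
    have MB: "M * B > 0" using assms(3,4) by simp
    have dj: "d j > 0" using assms(9) j by simp
    have "d j / (M * B * log 2 (1 + \<gamma> / \<alpha>)) < \<alpha> * (d j / (M * B * log 2 (1 + \<gamma>)))"
    proof -
      have gen: "\<And>L L' K D. L > 0 \<Longrightarrow> L' > 0 \<Longrightarrow> L < \<alpha> * L' \<Longrightarrow> K > 0 \<Longrightarrow> D > 0
          \<Longrightarrow> D / (K * L') < \<alpha> * (D / (K * L))"
      proof -
        fix L L' K D :: real assume h: "L > 0" "L' > 0" "L < \<alpha> * L'" "K > 0" "D > 0"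
        have "D * (K * L) < \<alpha> * D * (K * L')" using h by (simp add: algebra_simps)
        thus "D / (K * L') < \<alpha> * (D / (K * L))" using h by (simp add: field_simps)
      qed
      show ?thesis by (rule gen[OF L1 L2 k MB dj])
    qed
    thus ?thesis using sg sa by (simp add: \<gamma>_def)
  qed
  obtain j0 where j0: "j0 \<in> J" "kappa i j0" using assms(6)[OF i] by blast
  have fin: "finite (served_ues J kappa i)" using assms(2) by (simp add: served_ues_def)
  have ne: "served_ues J kappa i \<noteq> {}" using j0 by (auto simp: served_ues_def)
  show "\<alpha> * load_map I J kappa M B p d g s2 x i
             > load_map I J kappa M B p d g (\<alpha> * s2) (\<lambda>k. \<alpha> * x k) i"
    unfolding load_map_def sum_distrib_left
    by (rule sum_strict_mono[OF fin ne]) (use trm in \<open>auto simp: served_ues_def\<close>)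
qed

end
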